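(* Let $k\ge1$ be an integer and let $p=p(n)$ satisfy \[2\frac{\log(n)+\omega(n)}{n}\le p\le 1-(k+1)\frac{\log(n)+\omega(n)}{n}\] for some sequence $\omega(n)\to\infty$. Let $F(x,y)=x^{k+1}\big(y+(1-y)^{k+1}\big)^{x-k-1}$. Then $\lim_{n\to\infty}F(n,p(n))=0$.
   Context: $\log$ is the natural logarithm. *)

theory Defs
  imports Complex_Main
begin

definition F :: "nat \<Rightarrow> real \<Rightarrow> real \<Rightarrow> real" where
  "F k x y = x ^ (k + 1) * (y + (1 - y) ^ (k + 1)) powr (x - real k - 1)"

end

theory Submission
  imports Defs "HOL-Analysis.Analysis" "HOL-Real_Asymp.Real_Asymp"
begin

lemma pow_bound:
  fixes x :: real
  assumes "0 \<le> x" "x \<le> 1"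
  shows "(1 - x) ^ k \<le> 1 - real k * x + real k * (real k - 1) / 2 * x^2"
proof (induction k)
  case 0 then show ?case by simp
next
  case (Suc k)
  have "(1 - x) ^ Suc k = (1-x) * (1-x)^k" by simp
  also have "\<dots> \<le> (1-x) * (1 - real k * x + real k * (real k - 1) / 2 * x^2)"
    using Suc assms by (intro mult_left_mono) auto
  also have "\<dots> = 1 - real (Suc k) * x + real (Suc k) * (real (Suc k) - 1) / 2 * x^2
      - real k * (real k - 1) / 2 * x^3"
    by (simp add: field_simps power2_eq_square power3_eq_cube)
  also have "\<dots> \<le> 1 - real (Suc k) * x + real (Suc k) * (real (Suc k) - 1) / 2 * x^2"
  proof -
    have "0 \<le> real k * (real k - 1) / 2 * x^3"
      by (cases k) (use assms in auto)
    then show ?thesis by linarith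
  qed
  finally show ?case .
qed

lemma key:
  fixes nn S w :: real and k :: nat
  assumes k: "k \<ge> 1" and nn: "nn \<ge> 1" and w: "w \<ge> 0" and S: "S = ln nn + w"
    and SL: "real (k+3) * S \<le> nn"
  defines "L \<equiv> S / nn"
  defines "C \<equiv> 4 * (real k * (real k - 1) / 2 + real k) + (real k + 1)^2"
  shows "nn * (1 - 2*L - (1 - 2*L)^(k+1)) - real (k+1) * ln nn \<ge> min (w - C) (sqrt nn - real (k+1) * ln nn)"
    and "nn * (real (k+1) * L - (real (k+1) * L)^(k+1)) - real (k+1) * ln nn \<ge> min (w - C) (sqrt nn - real (k+1) * ln nn)"
proof -
  define K where "K = real k * (real k - 1) / 2"
  have K0: "K \<ge> 0" using k by (simp add: K_def)
  have lnpos: "ln nn \<ge> 0" using nn by simp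
  have CK: "C = 4*(K + real k) + (real k + 1)^2" by (simp add: C_def K_def)
  have kln: "ln nn \<le> real k * ln nn" and kw: "w \<le> real k * w"
    using k lnpos w by (auto intro: mult_right_mono[of 1 "real k", simplified])
  have S0: "S \<ge> 0" using S w lnpos by simp
  have nnL: "nn * L = S" using nn by (simp add: L_def)
  have L0: "L \<ge> 0" using S0 nn by (simp add: L_def)
  have Lle: "real (k+3) * L \<le> 1" using SL nn by (simp add: L_def field_simps)
  define x where "x = 2 * L"
  define a where "a = real (k+1) * L"
  have "4 * L \<le> real (k+3) * L" using L0 k by (intro mult_right_mono) auto
  hence x0: "0 \<le> x" and x1: "x \<le> 1/2" using L0 Lle k by (auto simp: x_def)
  have a0: "0 \<le> a" and a1: "a \<le> 1" using L0 Lle by (auto simp: a_def algebra_simps)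
  have a2: "1 - a \<ge> 2 * L" using Lle by (simp add: a_def algebra_simps)
  let ?M = "min (w - C) (sqrt nn - real (k+1) * ln nn)"
  show "nn * (1 - 2*L - (1 - 2*L)^(k+1)) - real (k+1) * ln nn \<ge> ?M"
  proof (cases "S^2 \<le> nn")
    case True
    have pb: "(1 - x)^k \<le> 1 - real k * x + K * x^2"
      using pow_bound[OF x0] x1 by (simp add: K_def)
    have "(1 - x)^(k+1) = (1 - x) * (1-x)^k" by simp
    also have "\<dots> \<le> (1 - x) * (1 - real k * x + K * x^2)"
      using pb x1 by (intro mult_left_mono) auto
    also have "\<dots> = 1 - x - real k * x + (K + real k) * x^2 - K * x^3"
      by (simp add: algebra_simps power2_eq_square power3_eq_cube)
    also have "\<dots> \<le> 1 - x - real k * x + (K + real k) * x^2"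
      using K0 x0 by simp
    finally have h: "1 - x - (1 - x)^(k+1) \<ge> real k * x - (K + real k) * x^2" by simp
    have "nn * (1 - x - (1 - x)^(k+1)) \<ge> nn * (real k * x - (K + real k) * x^2)"
      using h nn by (intro mult_left_mono) auto
    also have "nn * (real k * x - (K + real k) * x^2) = 2 * real k * S - 4 * (K + real k) * (S^2 / nn)"
      using nn by (simp add: x_def L_def field_simps power2_eq_square)
    also have "S^2 / nn \<le> 1" using True nn by simp
    hence "4 * (K + real k) * (S^2 / nn) \<le> 4 * (K + real k)"
      using K0 by (intro mult_left_le) auto
    hence "2 * real k * S - 4 * (K + real k) * (S^2 / nn) \<ge> 2 * real k * S - 4 * (K + real k)"
      by linarith
    finally have "nn * (1 - x - (1 - x)^(k+1)) \<ge> 2 * real k * S - 4 * (K + real k)" by simp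
    moreover have "2 * real k * S - 4 * (K + real k) - real (k+1) * ln nn \<ge> w - C"
    proof -
      have e: "2 * real k * S = 2 * real k * w + 2 * real k * ln nn" by (simp add: S algebra_simps)
      have e2: "real (k+1) * ln nn = ln nn + real k * ln nn" by (simp add: algebra_simps)
      have "w \<le> 2 * real k * w" using kw w by (simp add: algebra_simps)
      moreover have "(real k + 1)^2 \<ge> 0" by simp
      ultimately show ?thesis using e e2 kln unfolding CK by linarith
    qed
    ultimately show ?thesis by (simp add: x_def)
  next
    case False
    have sq: "sqrt nn < S"
      using False S0 nn by (metis abs_of_nonneg less_eq_real_def not_less real_sqrt_abs real_sqrt_less_iff real_sqrt_le_iff)
    have "(1 - x)^(k+1) \<le> (1 - x)^2"
      using x0 x1 k by (intro power_decreasing) auto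
    hence "1 - x - (1 - x)^(k+1) \<ge> x * (1 - x)" by (simp add: power2_eq_square algebra_simps)
    also have "x * (1 - x) \<ge> x / 2" 
    proof -
      have "x*x \<le> x*(1/2)" using x0 x1 by (intro mult_left_mono) auto
      thus ?thesis by (simp add: algebra_simps)
    qed
    finally have "nn * (1 - x - (1 - x)^(k+1)) \<ge> nn * (x/2)" using nn by (intro mult_left_mono) auto
    hence "nn * (1 - x - (1 - x)^(k+1)) \<ge> S" using nnL by (simp add: x_def)
    thus ?thesis using sq by (simp add: x_def)
  qed
  show "nn * (real (k+1) * L - (real (k+1) * L)^(k+1)) - real (k+1) * ln nn \<ge> ?M"
  proof -
    have pa: "a^(k+1) \<le> a^2" using a0 a1 k by (intro power_decreasing) auto
    hence ha: "a - a^(k+1) \<ge> a - a^2" by simp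
    show ?thesis
    proof (cases "S^2 \<le> nn")
      case True
      have "nn * (a - a^(k+1)) \<ge> nn * (a - a^2)" using ha nn by (intro mult_left_mono) auto
      also have "nn * (a - a^2) = real (k+1) * S - (real k + 1)^2 * (S^2 / nn)"
        using nn by (simp add: a_def L_def field_simps power2_eq_square)
      also have "S^2 / nn \<le> 1" using True nn by simp
      hence "(real k + 1)^2 * (S^2 / nn) \<le> (real k + 1)^2"
        by (intro mult_left_le) auto
      hence "real (k+1) * S - (real k + 1)^2 * (S^2 / nn) \<ge> real (k+1) * S - (real k + 1)^2"
        by linarith
      finally have "nn * (a - a^(k+1)) \<ge> real (k+1) * S - (real k + 1)^2" by simp
      moreover have "real (k+1) * S - (real k + 1)^2 - real (k+1) * ln nn \<ge> w - C"
      proof -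
        have e: "real (k+1) * S = real (k+1) * w + real (k+1) * ln nn" by (simp add: S algebra_simps)
        have "w \<le> real (k+1) * w" using w by (simp add: algebra_simps)
        moreover have "4*(K + real k) \<ge> 0" using K0 by simp
        ultimately show ?thesis using e unfolding CK by linarith
      qed
      ultimately show ?thesis by (simp add: a_def)
    next
      case False
      have sq: "sqrt nn < S"
        using False S0 nn by (metis abs_of_nonneg less_eq_real_def not_less real_sqrt_abs real_sqrt_less_iff real_sqrt_le_iff)
      have "a - a^2 = a * (1 - a)" by (simp add: power2_eq_square algebra_simps)
      also have "a * (1 - a) \<ge> L"
      proof -
        have m1: "real (k+1) * (real (k+3) * L) \<le> real (k+1)"
          using Lle by (intro mult_left_le) auto
        have a3: "2 \<le> (1 - a) * real (k+3)"
          using m1 by (simp add: a_def algebra_simps)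
        have "a * 2 \<le> a * ((1 - a) * real (k+3))" using a0 a3 by (intro mult_left_mono) auto
        moreover have "L * real (k+3) \<le> a * 2"
        proof -
          have "L \<le> L * real k" using L0 k mult_left_mono[of 1 "real k" L] by simp
          thus ?thesis by (simp add: a_def algebra_simps)
        qed
        ultimately have "L * real (k+3) \<le> a * ((1 - a) * real (k+3))" by linarith
        hence "L * real (k+3) \<le> (a * (1 - a)) * real (k+3)" by (simp only: mult.assoc)
        thus ?thesis by (rule mult_right_le_imp_le) simp
      qed
      finally have "nn * (a - a^(k+1)) \<ge> nn * L" using ha nn by (intro mult_left_mono) auto
      thus ?thesis using sq nnL by (simp add: a_def)
    qed
  qed
qed


lemma powr_exp_bound:
  fixes g N :: real
  assumes "0 \<le> g" "g \<le> 1" "0 \<le> N"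
  shows "g powr N \<le> exp (- N * (1 - g))"
proof (cases "g = 0")
  case True then show ?thesis by simp
next
  case False
  hence gp: "g > 0" using assms by simp
  have "N * ln g \<le> N * (g - 1)" using ln_le_minus_one[OF gp] assms by (intro mult_left_mono) auto
  hence "exp (N * ln g) \<le> exp (- N * (1 - g))" by (simp add: algebra_simps)
  thus ?thesis using gp by (simp add: powr_def mult.commute)
qed

lemma term_bound:
  fixes nn g T :: real and k :: nat
  assumes nn: "real k + 1 \<le> nn" and g: "0 \<le> g" "g \<le> 1"
    and T: "nn * (1 - g) - real (k+1) * ln nn \<ge> T"
  shows "nn ^ (k+1) * g powr (nn - real k - 1) \<le> exp (real (k+1)) * exp (- T)"
proof -
  have nnp: "nn > 0" using nn by linarith
  have "g powr (nn - real k - 1) \<le> exp (- (nn - real k - 1) * (1 - g))"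
    using g nn by (intro powr_exp_bound) auto
  moreover have E: "nn ^ (k+1) = exp (real (k+1) * ln nn)"
    using nnp by (simp add: exp_of_nat_mult[symmetric] ln_realpow[symmetric] del: of_nat_Suc) 
  ultimately have "nn ^ (k+1) * g powr (nn - real k - 1) \<le> exp (real (k+1) * ln nn) * exp (- (nn - real k - 1) * (1 - g))"
    using nnp by (metis mult_left_mono exp_ge_zero)
  also have "exp (real (k+1) * ln nn) * exp (- (nn - real k - 1) * (1 - g))
      = exp (real (k+1) * ln nn - (nn - real k - 1) * (1 - g))" by (simp add: exp_add[symmetric] algebra_simps)
  also have "\<dots> \<le> exp (real (k+1) + - T)"
  proof -
    have "(real k + 1) * (1 - g) \<le> real k + 1" using g by (intro mult_left_le) auto
    hence "real (k+1) * ln nn - (nn - real k - 1) * (1 - g) \<le> real (k+1) + - T"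
      using T by (simp add: algebra_simps)
    thus ?thesis by simp
  qed
  also have "\<dots> = exp (real (k+1)) * exp (- T)" by (rule exp_add)
  finally show ?thesis .
qed

lemma g_convex:
  "convex_on {0..1} (\<lambda>y::real. y + (1 - y) ^ (k + 1))"
proof (rule f''_ge0_imp_convex[where f' = "\<lambda>y. 1 - real (k+1) * (1 - y) ^ k"
        and f'' = "\<lambda>y. real (k+1) * real k * (1 - y) ^ (k - 1)"])
  show "convex {0..1::real}" by simp
  fix x :: real assume x: "x \<in> {0..1}"
  show "((\<lambda>y. y + (1 - y) ^ (k + 1)) has_real_derivative 1 - real (k+1) * (1 - x) ^ k) (at x)"
    by (rule derivative_eq_intros | simp)+
  show "((\<lambda>y. 1 - real (k+1) * (1 - y) ^ k) has_real_derivative real (k+1) * real k * (1 - x) ^ (k - 1)) (at x)"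
    by (rule derivative_eq_intros | simp)+
  show "0 \<le> real (k+1) * real k * (1 - x) ^ (k - 1)" using x by simp
qed

theorem lemma2p9:
  fixes k :: nat and p \<omega> :: "nat \<Rightarrow> real"
  assumes "k \<ge> 1"
    and "filterlim \<omega> at_top sequentially"
    and "\<forall>\<^sub>F n in sequentially.
           2 * (ln (real n) + \<omega> n) / real n \<le> p n \<and>
           p n \<le> 1 - real (k + 1) * (ln (real n) + \<omega> n) / real n"
  shows "(\<lambda>n. F k (real n) (p n)) \<longlonglongrightarrow> 0"
proof -
  define C where "C = 4 * (real k * (real k - 1) / 2 + real k) + (real k + 1)^2"
  define T where "T n = min (\<omega> n - C) (sqrt (real n) - real (k+1) * ln (real n))" for n
  define g where "g y = y + (1 - y) ^ (k + 1)" for y :: real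
  have T: "filterlim T at_top sequentially"
    unfolding filterlim_at_top
  proof
    fix Z :: real
    have "eventually (\<lambda>n. Z + C \<le> \<omega> n) sequentially"
      using assms(2) by (simp add: filterlim_at_top)
    moreover have "filterlim (\<lambda>n. sqrt (real n) - real (k+1) * ln (real n)) at_top sequentially"
      by real_asymp
    hence "eventually (\<lambda>n. Z \<le> sqrt (real n) - real (k+1) * ln (real n)) sequentially"
      by (simp add: filterlim_at_top)
    ultimately show "eventually (\<lambda>n. Z \<le> T n) sequentially"
      by eventually_elim (simp add: T_def)
  qed
  have lim: "(\<lambda>n. 2 * exp (real (k+1)) * exp (- T n)) \<longlonglongrightarrow> 0"
  proof -
    have "filterlim (\<lambda>n. - T n) at_bot sequentially"
      using T by (rule filterlim_uminus_at_top[THEN iffD1])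
    hence "(\<lambda>n. exp (- T n)) \<longlonglongrightarrow> 0"
      by (rule filterlim_compose[OF exp_at_bot])
    thus ?thesis by (intro tendsto_mult_right_zero)
  qed
  have ev: "eventually (\<lambda>n. F k (real n) (p n) \<le> 2 * exp (real (k+1)) * exp (- T n)) sequentially"
    using assms(3) eventually_ge_at_top[of "k+1"]
      assms(2)[unfolded filterlim_at_top, rule_format, of 0]
  proof eventually_elim
    case (elim n)
    define S where "S = ln (real n) + \<omega> n"
    define L where "L = S / real n"
    have nk: "real k + 1 \<le> real n" using elim(2) by simp
    have n1: "real n \<ge> 1" using elim(2) by simp
    have w: "\<omega> n \<ge> 0" using elim(3) by simp
    have lnp: "ln (real n) \<ge> 0" using n1 by simp
    have L0: "L \<ge> 0" using w lnp n1 by (simp add: L_def S_def)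
    have pl: "2 * L \<le> p n" and pu: "p n \<le> 1 - real (k+1) * L"
      using elim(1) by (simp_all add: L_def S_def)
    have SL: "real (k+3) * S \<le> real n"
    proof -
      have "2 * L + real (k+1) * L \<le> 1" using pl pu by linarith
      hence "real (k+3) * L \<le> 1" by (simp add: algebra_simps)
      thus ?thesis using n1 by (simp add: L_def field_simps)
    qed
    have k1: "real (k+1) * L \<le> real (k+3) * L" using L0 by (intro mult_right_mono) auto
    have k2: "2 * L + real (k+1) * L = real (k+3) * L" by (simp add: algebra_simps)
    have Lk: "real (k+3) * L \<le> 1" using SL n1 by (simp add: L_def field_simps)
    define y1 where "y1 = 2 * L"
    define y2 where "y2 = 1 - real (k+1) * L"
    have kL0: "real (k+1) * L \<ge> 0" using L0 by simp
    have y1: "0 \<le> y1" "y1 \<le> 1" unfolding y1_def using L0 Lk k1 k2 kL0 by linarith+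
    have y2: "0 \<le> y2" "y2 \<le> 1" unfolding y2_def using L0 Lk k1 k2 kL0 by linarith+
    have g01: "0 \<le> g y" "g y \<le> 1" if "0 \<le> y" "y \<le> 1" for y
    proof -
      have "(1 - y) ^ (k+1) \<le> (1 - y) ^ 1" using that by (intro power_decreasing) auto
      thus "g y \<le> 1" by (simp add: g_def)
      show "0 \<le> g y" using that by (simp add: g_def)
    qed
    have pin: "p n \<in> {y1..y2}" using pl pu by (simp add: y1_def y2_def)
    have cv: "convex_on {y1..y2} g"
    proof -
      have cv0: "convex_on {0..1} g" unfolding g_def[abs_def] by (rule g_convex)
      show ?thesis by (rule convex_on_subset[OF cv0]) (use y1 y2 in auto)
    qed
    have gp: "g (p n) \<le> max (g y1) (g y2)" by (rule convex_on_le_max[OF cv pin])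
    have p01: "0 \<le> p n" "p n \<le> 1" using pin y1 y2 by auto
    have N0: "0 \<le> real n - real k - 1" using nk by simp
    have "g (p n) powr (real n - real k - 1) \<le> max (g y1) (g y2) powr (real n - real k - 1)"
      by (rule powr_mono2[OF N0 g01(1)[OF p01] gp])
    also have "\<dots> \<le> g y1 powr (real n - real k - 1) + g y2 powr (real n - real k - 1)"
      by (simp add: max_def)
    finally have "g (p n) powr (real n - real k - 1) \<le> g y1 powr (real n - real k - 1) + g y2 powr (real n - real k - 1)" .
    moreover have "F k (real n) (p n) = real n ^ (k+1) * g (p n) powr (real n - real k - 1)"
      by (simp add: F_def g_def)
    ultimately have "F k (real n) (p n) \<le> real n ^ (k+1) * (g y1 powr (real n - real k - 1) + g y2 powr (real n - real k - 1))"
      by (metis mult_left_mono zero_le_power of_nat_0_le_iff)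
    also have "\<dots> = real n ^ (k+1) * g y1 powr (real n - real k - 1) + real n ^ (k+1) * g y2 powr (real n - real k - 1)"
      by (simp add: algebra_simps)
    also have "\<dots> \<le> exp (real (k+1)) * exp (- T n) + exp (real (k+1)) * exp (- T n)"
    proof (intro add_mono term_bound[OF nk] g01 y1 y2)
      have "real n * (1 - 2*L - (1 - 2*L)^(k+1)) - real (k+1) * ln (real n) \<ge> T n"
        using key(1)[OF assms(1) n1 w S_def SL] unfolding T_def C_def L_def .
      thus "T n \<le> real n * (1 - g y1) - real (k + 1) * ln (real n)"
        by (simp add: g_def y1_def algebra_simps)
      have "real n * (real (k+1) * L - (real (k+1) * L)^(k+1)) - real (k+1) * ln (real n) \<ge> T n"
        using key(2)[OF assms(1) n1 w S_def SL] unfolding T_def C_def L_def .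
      thus "T n \<le> real n * (1 - g y2) - real (k + 1) * ln (real n)"
        by (simp add: g_def y2_def algebra_simps)
    qed
    finally show ?case by (simp add: algebra_simps)
  qed
  have ge: "eventually (\<lambda>n. 0 \<le> F k (real n) (p n)) sequentially"
    by (simp add: F_def)
  show ?thesis
    by (rule tendsto_sandwich[OF ge ev tendsto_const lim])
qed

end
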